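(* Let $\mathcal{C}\subseteq\mathbb{F}_q^n$ be a linear code of length $n$, dimension $k\ge1$ and minimum distance $d\ge2$, and let $J=n-k-d+2$. Then the average locality of $\mathcal{C}$ satisfies $$\overline{r}\ \ge\ \Big\lceil\frac{k}{J}\Big\rceil\left(1-\frac{J\lceil\frac{k}{J}\rceil-k}{n}\right).$$ Equivalently, $\overline{r}\ge \alpha\lceil k/J\rceil+(1-\alpha)\lfloor k/J\rfloor$ with $\alpha=\frac1n\big(J\lceil k/J\rceil-k\big)\big(\lfloor k/J\rfloor+1\big)$.
   Context: For a codeword $\mathbf{y}=(y_1,\dots,y_n)\in\mathcal{C}$, the locality $\mathrm{Loc}(y_i)$ of the $i$-th symbol is the smallest size of a set $\mathcal{I}\subseteq[1,n]\setminus\{i\}$ such that there are scalars $\alpha_l\in\mathbb{F}_q$ with $y_i=\sum_{l\in\mathcal{I}}\alpha_l y_l$ for every codeword $\mathbf{y}\in\mathcal{C}$. The average locality is $\overline{r}=\frac1n\sum_{i=1}^n\mathrm{Loc}(y_i)$. Note $J\ge1$ by the Singleton bound $d\le n-k+1$. *)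

theory Defs
  imports Complex_Main "HOL-Library.Function_Algebras"
begin

text \<open>Words of length n over a field 'a are modelled as functions nat => 'a that
vanish outside {..<n}; the ambient space is a vector space under pointwise scaling.\<close>

definition cscale :: "'a::field \<Rightarrow> (nat \<Rightarrow> 'a) \<Rightarrow> (nat \<Rightarrow> 'a)" where
  "cscale c y = (\<lambda>i. c * y i)"

definition linear_code :: "nat \<Rightarrow> (nat \<Rightarrow> 'a::field) set \<Rightarrow> bool" where
  "linear_code n C \<longleftrightarrow> module.subspace cscale C \<and> (\<forall>y\<in>C. \<forall>i. n \<le> i \<longrightarrow> y i = 0)"

definition code_dim :: "(nat \<Rightarrow> 'a::field) set \<Rightarrow> nat" where
  "code_dim C = vector_space.dim cscale C"

definition hamming_dist :: "nat \<Rightarrow> (nat \<Rightarrow> 'a) \<Rightarrow> (nat \<Rightarrow> 'a) \<Rightarrow> nat" where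
  "hamming_dist n x y = card {i. i < n \<and> x i \<noteq> y i}"

definition min_dist :: "nat \<Rightarrow> (nat \<Rightarrow> 'a) set \<Rightarrow> nat" where
  "min_dist n C = Min {hamming_dist n x y | x y. x \<in> C \<and> y \<in> C \<and> x \<noteq> y}"

definition locality :: "nat \<Rightarrow> (nat \<Rightarrow> 'a::field) set \<Rightarrow> nat \<Rightarrow> nat" where
  "locality n C i = (LEAST m. \<exists>I \<alpha>. I \<subseteq> {..<n} - {i} \<and> card I = m \<and>
       (\<forall>y\<in>C. y i = (\<Sum>l\<in>I. \<alpha> l * y l)))"

definition avg_locality :: "nat \<Rightarrow> (nat \<Rightarrow> 'a::field) set \<Rightarrow> real" where
  "avg_locality n C = (\<Sum>i<n. real (locality n C i)) / real n"

end

theory Submission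
  imports Defs
begin

lemma arith_final:
  fixes \<rho> h d D t :: int
  assumes "\<rho> \<ge> t" "\<rho> \<ge> D" "h \<ge> 0" "d \<ge> 1" "t \<ge> 1" "D \<ge> 0"
  shows "\<rho> * (h + d - 1 + D) \<ge> t * (d - 1 + 2 * D - t - h * (t - 1))"
proof -
  have 1: "\<rho> * h \<ge> - (t * (h * (t - 1)))" using assms
    by (smt (verit) mult_nonneg_nonneg)
  have 2: "\<rho> * (d - 1) \<ge> t * (d - 1)" using assms by (simp add: mult_right_mono)
  have 3: "\<rho> * D \<ge> 2 * t * D - t * t"
  proof (cases "D \<ge> t")
    case True
    have "\<rho> * D \<ge> D * D" using assms by (simp add: mult_right_mono)
    moreover have "(D - t) * (D - t) \<ge> 0" by simp
    ultimately show ?thesis by (simp add: algebra_simps)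
  next
    case False
    have "\<rho> * D \<ge> t * D" using assms by (simp add: mult_right_mono)
    moreover have "t * D \<le> t * t" using False assms by (simp add: mult_left_mono)
    ultimately show ?thesis by (simp add: algebra_simps)
  qed
  show ?thesis using 1 2 3 by (simp add: algebra_simps)
qed

lemma arith_step:
  fixes \<rho> a \<Delta> t :: int
  assumes "\<rho> \<ge> a" "a \<ge> \<Delta>" "a \<ge> 0" "t \<ge> 1"
  shows "\<rho> * (1 + a) - 2 * t * \<Delta> + t * (t - 1) * (1 + a - \<Delta>) \<ge> 0"
proof (cases "\<Delta> \<ge> 0")
  case True
  have 1: "\<rho> * (1 + a) \<ge> \<Delta> * (1 + \<Delta>)"
  proof -
    have "\<rho> * (1 + a) \<ge> a * (1 + a)" using assms by (simp add: mult_right_mono)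
    moreover have "a * (1 + a) \<ge> \<Delta> * (1 + \<Delta>)" using assms True
      by (simp add: mult_mono)
    ultimately show ?thesis by linarith
  qed
  have 2: "t * (t - 1) * (1 + a - \<Delta>) \<ge> t * (t - 1)"
  proof -
    have "t * (t - 1) \<ge> 0" using assms by simp
    then show ?thesis using assms by (simp add: mult_left_mono[of 1 "1 + a - \<Delta>" "t*(t-1)", simplified])
  qed
  have 3: "(\<Delta> - t) * (\<Delta> - t + 1) \<ge> 0"
  proof (cases "\<Delta> \<ge> t")
    case True then show ?thesis by simp
  next
    case False then have "\<Delta> - t + 1 \<le> 0" by simp
    then show ?thesis using False by (simp add: mult_nonpos_nonpos)
  qed
  show ?thesis using 1 2 3 by (simp add: algebra_simps)
next
  case False
  have "\<rho> * (1 + a) \<ge> 0" using assms by simp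
  moreover have "t * (t - 1) * (1 + a - \<Delta>) \<ge> 0" using assms False by simp
  moreover have "2 * t * \<Delta> \<le> 0" using assms False by (simp add: mult_nonneg_nonpos)
  ultimately show ?thesis by linarith
qed




lemma Dm_union_bound:
  fixes Dm :: "nat set \<Rightarrow> nat"
  assumes A1: "\<And>T j. T \<subseteq> {..<n} \<Longrightarrow> j < n \<Longrightarrow> Dm T \<le> Dm (insert j T) + 1"
  shows "finite X \<Longrightarrow> X \<subseteq> {..<n} \<Longrightarrow> T \<subseteq> {..<n} \<Longrightarrow> Dm T \<le> Dm (T \<union> X) + card X"
proof (induction X rule: finite_induct)
  case empty then show ?case by simp
next
  case (insert x F)
  have "Dm T \<le> Dm (T \<union> F) + card F" using insert by auto
  moreover have "Dm (T \<union> F) \<le> Dm (insert x (T \<union> F)) + 1"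
    using A1[of "T \<union> F" x] insert by auto
  ultimately show ?case using insert by simp
qed

lemma A2_from_B:
  fixes Dm :: "nat set \<Rightarrow> nat"
  assumes A1: "\<And>T j. T \<subseteq> {..<n} \<Longrightarrow> j < n \<Longrightarrow> Dm T \<le> Dm (insert j T) + 1"
  and B: "\<And>T. T \<subseteq> {..<n} \<Longrightarrow> Dm T \<ge> 1 \<Longrightarrow> card T + d \<le> n"
  and d1: "d \<ge> 1"
  shows "T \<subseteq> {..<n} \<Longrightarrow> Dm T \<ge> 1 \<Longrightarrow> card T + Dm T + d \<le> n + 1"
proof (induction "n - card T" arbitrary: T rule: less_induct)
  case less
  show ?case
  proof (cases "Dm T = 1")
    case True then show ?thesis using B[OF less.prems] by simp
  next
    case False
    have fT: "finite T" using less.prems(1) finite_subset by blast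
    have "card T + d \<le> n" using B[OF less.prems] .
    then have "card T < card {..<n}" using d1 by simp
    then obtain j where j: "j < n" "j \<notin> T"
      by (metis lessThan_iff less.prems(1) psubset_card_mono subsetI subset_antisym finite_lessThan less_irrefl)
    have T': "insert j T \<subseteq> {..<n}" using j less.prems(1) by auto
    have c: "card (insert j T) = card T + 1" using fT j by simp
    have "Dm (insert j T) \<ge> 1" using A1[OF less.prems(1) j(1)] False less.prems(2) by linarith
    then have "card (insert j T) + Dm (insert j T) + d \<le> n + 1"
    proof -
      have "n - card (insert j T) < n - card T" using c \<open>card T + d \<le> n\<close> d1 by simp
      then show ?thesis using less.hyps[of "insert j T"] T' \<open>Dm (insert j T) \<ge> 1\<close> by blast
    qed
    then show ?thesis using A1[OF less.prems(1) j(1)] c by linarith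
  qed
qed

lemma main_abs:
  fixes Dm :: "nat set \<Rightarrow> nat" and r :: "nat \<Rightarrow> nat" and R :: "nat \<Rightarrow> nat set" and n d t :: nat
  assumes A1: "\<And>T j. T \<subseteq> {..<n} \<Longrightarrow> j < n \<Longrightarrow> Dm T \<le> Dm (insert j T) + 1"
  and A2: "\<And>T. T \<subseteq> {..<n} \<Longrightarrow> Dm T \<ge> 1 \<Longrightarrow> card T + Dm T + d \<le> n + 1"
  and A3: "\<And>i. i < n \<Longrightarrow> R i \<subseteq> {..<n} - {i} \<and> card (R i) = r i"
  and A4: "\<And>i T. i < n \<Longrightarrow> R i \<subseteq> T \<Longrightarrow> T \<subseteq> {..<n} \<Longrightarrow> Dm (insert i T) = Dm T"
  and d1: "d \<ge> 1" and t1: "t \<ge> 1"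
  shows "U \<subseteq> {..<n} \<Longrightarrow> Dm U \<ge> 1 \<Longrightarrow>
    ((\<forall>i\<in>{..<n}-U. t \<le> r i) \<or>
       (int t - 1) * (int n + 1 - int d - int (card U) - int (Dm U) + 1) < int (Dm U)) \<Longrightarrow>
    (\<Sum>i\<in>{..<n}-U. int (r i)) \<ge> int t * (int d - 1 + 2 * int (Dm U) - int t
        - (int n + 1 - int d - int (card U) - int (Dm U)) * (int t - 1))"
proof (induction "n - card U" arbitrary: U rule: less_induct)
  case less
  define h where "h = int n + 1 - int d - int (card U) - int (Dm U)"
  have fU: "finite U" using less.prems(1) finite_subset by blast
  have h0: "h \<ge> 0" using A2[OF less.prems(1,2)] unfolding h_def by linarith
  have cU: "card U + d \<le> n" using A2[OF less.prems(1,2)] less.prems(2) by linarith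
  have ne: "{..<n} - U \<noteq> {}"
  proof
    assume "{..<n} - U = {}"
    then have "{..<n} \<subseteq> U" by blast
    then have "card {..<n} \<le> card U" by (rule card_mono[OF fU])
    then have "n \<le> card U" by simp
    then show False using cU d1 by linarith
  qed
  define \<rho> where "\<rho> = Min (r ` ({..<n} - U))"
  have "\<rho> \<in> r ` ({..<n} - U)" unfolding \<rho>_def using ne by (intro Min_in) auto
  then obtain i where i: "i < n" "i \<notin> U" "r i = \<rho>" by auto
  have rmin: "\<And>j. j \<in> {..<n} - U \<Longrightarrow> \<rho> \<le> r j" unfolding \<rho>_def by (intro Min_le) auto
  define X where "X = R i - U"
  define a where "a = card X"
  define U' where "U' = insert i (U \<union> R i)"
  have Ri: "R i \<subseteq> {..<n} - {i}" "card (R i) = r i" using A3[OF i(1)] by auto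
  have fX: "finite X" unfolding X_def using Ri finite_subset by blast
  have aR: "a \<le> r i" unfolding a_def X_def using Ri
    by (metis Diff_subset card_mono finite_Diff finite_lessThan finite_subset)
  have U'sub: "U' \<subseteq> {..<n}" unfolding U'_def using i Ri less.prems(1) by auto
  have UX: "U \<union> X = U \<union> R i" unfolding X_def by blast
  have DU': "Dm U' = Dm (U \<union> R i)" unfolding U'_def
    by (rule A4[OF i(1)]) (use Ri less.prems(1) in auto)
  have Dle: "Dm U \<le> Dm U' + a"
    using Dm_union_bound[OF A1, where X=X and T=U] fX Ri less.prems(1) UX DU' unfolding X_def a_def by auto
  have iX: "i \<notin> X" unfolding X_def using Ri by auto
  have cardU': "card U' = card U + 1 + a"
  proof -
    have "U' = insert i (U \<union> X)" unfolding U'_def UX ..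
    moreover have "U \<inter> X = {}" unfolding X_def by blast
    ultimately show ?thesis using fU fX iX i(2) a_def by (simp add: card_Un_disjoint)
  qed
  have U'U: "U' - U = insert i X" unfolding U'_def X_def using i(2) by blast
  have split: "(\<Sum>j\<in>{..<n}-U. int (r j)) = (\<Sum>j\<in>insert i X. int (r j)) + (\<Sum>j\<in>{..<n}-U'. int (r j))"
  proof -
    have "{..<n} - U = (U' - U) \<union> ({..<n} - U')" using U'sub unfolding U'_def by blast
    moreover have "(U' - U) \<inter> ({..<n} - U') = {}" by blast
    ultimately have "(\<Sum>j\<in>{..<n}-U. int (r j)) = (\<Sum>j\<in>U'-U. int (r j)) + (\<Sum>j\<in>{..<n}-U'. int (r j))"
      using finite_subset[OF _ finite_lessThan, of "U' - U" n] U'sub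
      by (metis (no_types, lifting) Diff_subset finite_Diff finite_lessThan order_trans sum.union_disjoint)
    then show ?thesis using U'U by simp
  qed
  have XsubO: "insert i X \<subseteq> {..<n} - U" using U'U U'sub by blast
  have sumX: "(\<Sum>j\<in>insert i X. int (r j)) \<ge> (1 + int a) * int \<rho>"
  proof -
    have "(\<Sum>j\<in>insert i X. int (r j)) \<ge> (\<Sum>j\<in>insert i X. int \<rho>)"
      by (rule sum_mono) (use rmin XsubO in auto)
    then show ?thesis using fX iX a_def by simp
  qed
  have t_le_rho_or: "t \<le> \<rho> \<or> (int t - 1) * (h + 1) < int (Dm U)"
    using less.prems(3) i rmin unfolding h_def by auto
  show ?case
  proof (cases "Dm U' = 0")
    case True
    have DUa: "Dm U \<le> \<rho>" using Dle True aR i(3) by simp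
    have trho: "t \<le> \<rho>"
    proof (cases "t \<le> \<rho>")
      case False
      then have "(int t - 1) * (h + 1) < int (Dm U)" using t_le_rho_or by auto
      moreover have "(int t - 1) * (h + 1) \<ge> int t - 1" using h0 t1 by (simp add: mult_left_mono[of 1 "h+1", simplified])
      ultimately show ?thesis using DUa by linarith
    qed
    have "(\<Sum>j\<in>{..<n}-U. int (r j)) \<ge> (\<Sum>j\<in>{..<n}-U. int \<rho>)"
      by (rule sum_mono) (use rmin in auto)
    also have "(\<Sum>j\<in>{..<n}-U. int \<rho>) = int \<rho> * (h + int d - 1 + int (Dm U))"
    proof -
      have "card ({..<n} - U) = n - card U" using fU less.prems(1) by (simp add: card_Diff_subset)
      then show ?thesis unfolding h_def using cU by (simp add: algebra_simps)
    qed
    finally have S: "(\<Sum>j\<in>{..<n}-U. int (r j)) \<ge> int \<rho> * (h + int d - 1 + int (Dm U))" .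
    have "int \<rho> * (h + int d - 1 + int (Dm U)) \<ge> int t * (int d - 1 + 2 * int (Dm U) - int t - h * (int t - 1))"
      by (rule arith_final) (use trho DUa h0 d1 t1 in auto)
    then show ?thesis using S unfolding h_def by linarith
  next
    case False
    then have D'1: "Dm U' \<ge> 1" by simp
    define h' where "h' = int n + 1 - int d - int (card U') - int (Dm U')"
    define \<Delta> where "\<Delta> = int (Dm U) - int (Dm U')"
    have \<Delta>a: "\<Delta> \<le> int a" using Dle unfolding \<Delta>_def by linarith
    have hh': "h' = h - 1 - int a + \<Delta>" unfolding h'_def h_def \<Delta>_def using cardU' by simp
    have cond': "(\<forall>j\<in>{..<n}-U'. t \<le> r j) \<or> (int t - 1) * (h' + 1) < int (Dm U')"
    proof (cases "t \<le> \<rho>")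
      case True
      then show ?thesis using rmin U'sub unfolding U'_def by fastforce
    next
      case False
      then have c: "(int t - 1) * (h + 1) < int (Dm U)" using t_le_rho_or by auto
      have "h' + 1 \<le> h" using hh' \<Delta>a by simp
      then have "(int t - 1) * (h' + 1) \<le> (int t - 1) * h" using t1 by (simp add: mult_left_mono)
      moreover have "\<Delta> \<le> int t - 1" using \<Delta>a aR i(3) False by linarith
      ultimately show ?thesis using c unfolding \<Delta>_def by (simp add: algebra_simps)
    qed
    have lt: "n - card U' < n - card U" using cardU' U'sub
      using card_mono[OF finite_lessThan U'sub] by simp
    have IH: "(\<Sum>j\<in>{..<n}-U'. int (r j)) \<ge> int t * (int d - 1 + 2 * int (Dm U') - int t - h' * (int t - 1))"
      using less.hyps[OF lt U'sub D'1 cond'[unfolded h'_def]] unfolding h'_def .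
    have ar: "int \<rho> * (1 + int a) - 2 * int t * \<Delta> + int t * (int t - 1) * (1 + int a - \<Delta>) \<ge> 0"
      by (rule arith_step) (use aR i(3) \<Delta>a t1 in auto)
    have "(\<Sum>j\<in>{..<n}-U. int (r j)) \<ge> (1 + int a) * int \<rho> + int t * (int d - 1 + 2 * int (Dm U') - int t - h' * (int t - 1))"
      using split sumX IH by linarith
    moreover have "int (Dm U') = int (Dm U) - \<Delta>" unfolding \<Delta>_def by simp
    ultimately have "(\<Sum>j\<in>{..<n}-U. int (r j)) \<ge> int t * (int d - 1 + 2 * int (Dm U) - int t - h * (int t - 1))"
      using ar hh' by (simp add: algebra_simps)
    then show ?thesis unfolding h_def .
  qed
qed



interpretation cs: vector_space "cscale :: 'a::field \<Rightarrow> (nat \<Rightarrow> 'a) \<Rightarrow> (nat \<Rightarrow> 'a)"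
  by unfold_locales (auto simp: cscale_def algebra_simps fun_eq_iff)

definition ZZ :: "(nat \<Rightarrow> 'a::zero) set \<Rightarrow> nat set \<Rightarrow> (nat \<Rightarrow> 'a) set" where
  "ZZ C T = {y\<in>C. \<forall>i\<in>T. y i = 0}"

lemma sub_closed:
  fixes C :: "(nat \<Rightarrow> 'a::field) set"
  assumes "cs.subspace C" "y \<in> C" "w \<in> C"
  shows "(\<lambda>l. y l - c * w l) \<in> C"
proof -
  have "(\<lambda>l. y l - c * w l) = y + cscale (-c) w" by (simp add: fun_eq_iff cscale_def)
  then show ?thesis using assms cs.subspace_add cs.subspace_scale by metis
qed

lemma finite_code:
  fixes C :: "(nat \<Rightarrow> 'a::{finite,zero}) set"
  assumes "\<forall>y\<in>C. \<forall>i. n \<le> i \<longrightarrow> y i = 0"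
  shows "finite C"
proof -
  have "inj_on (\<lambda>y. map y [0..<n]) C"
  proof
    fix x y assume xy: "x \<in> C" "y \<in> C" "map x [0..<n] = map y [0..<n]"
    show "x = y"
    proof
      fix i show "x i = y i"
      proof (cases "i < n")
        case True then show ?thesis using xy(3) True by (auto simp: map_eq_conv)
      next
        case False then have "n \<le> i" by simp
        then have "x i = 0" "y i = 0" using assms xy(1,2) by blast+
        then show ?thesis by simp
      qed
    qed
  qed
  have s1: "(\<lambda>y. map y [0..<n]) ` C \<subseteq> {xs. set xs \<subseteq> UNIV \<and> length xs = n}" by auto
  have s2: "finite {xs :: 'a list. set xs \<subseteq> UNIV \<and> length xs = n}"
    by (rule finite_lists_length_eq) simp
  have "finite ((\<lambda>y. map y [0..<n]) ` C)" using s1 s2 by (rule finite_subset)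
  then show ?thesis using \<open>inj_on _ C\<close> by (rule finite_imageD)
qed

lemma dimstep:
  fixes C :: "(nat \<Rightarrow> 'a::field) set"
  assumes sub: "cs.subspace C" and fin: "finite C"
  shows "cs.dim (ZZ C T) \<le> cs.dim (ZZ C (insert j T)) + 1"
proof (cases "\<forall>y\<in>ZZ C T. y j = 0")
  case True
  then have "ZZ C T = ZZ C (insert j T)" unfolding ZZ_def by auto
  then show ?thesis by simp
next
  case False
  then obtain w where w: "w \<in> ZZ C T" "w j \<noteq> 0" by auto
  obtain B where B: "B \<subseteq> ZZ C (insert j T)" "cs.independent B" "ZZ C (insert j T) \<subseteq> cs.span B"
    "card B = cs.dim (ZZ C (insert j T))"
    using cs.basis_exists by blast
  have "B \<subseteq> C" using B(1) unfolding ZZ_def by auto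
  then have fB: "finite B" using fin by (rule finite_subset)
  have "ZZ C T \<subseteq> cs.span (insert w B)"
  proof
    fix y assume y: "y \<in> ZZ C T"
    define c where "c = y j / w j"
    define z where "z = (\<lambda>l. y l - c * w l)"
    have "z \<in> C" unfolding z_def using sub_closed[OF sub] y w unfolding ZZ_def by auto
    moreover have "\<forall>i\<in>insert j T. z i = 0" using y w unfolding z_def c_def ZZ_def by auto
    ultimately have "z \<in> ZZ C (insert j T)" unfolding ZZ_def by auto
    then have zs: "z \<in> cs.span (insert w B)" using B(3) cs.span_mono[of B "insert w B"] by blast
    have ws: "cscale c w \<in> cs.span (insert w B)" by (intro cs.span_scale cs.span_base) simp
    have "y = z + cscale c w" unfolding z_def by (simp add: fun_eq_iff cscale_def)
    then show "y \<in> cs.span (insert w B)" using zs ws cs.span_add by metis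
  qed
  then have "cs.dim (ZZ C T) \<le> card (insert w B)" using fB by (intro cs.dim_le_card) auto
  also have "\<dots> \<le> card B + 1" using fB by (simp add: card_insert_if)
  finally show ?thesis using B(4) by simp
qed

lemma nonzero_in:
  fixes C :: "(nat \<Rightarrow> 'a::field) set"
  assumes "cs.dim (ZZ C T) \<ge> 1"
  shows "\<exists>y\<in>ZZ C T. y \<noteq> 0"
proof (rule ccontr)
  assume "\<not> ?thesis"
  then have "ZZ C T \<subseteq> cs.span {}" by auto
  then have "cs.dim (ZZ C T) \<le> card ({} :: (nat \<Rightarrow> 'a) set)" by (intro cs.dim_le_card) auto
  then show False using assms by simp
qed

lemma weight_bound:
  fixes C :: "(nat \<Rightarrow> 'a::field) set"
  assumes lc: "linear_code n C" and md: "min_dist n C = d"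
    and T: "T \<subseteq> {..<n}" and y: "y \<in> C" "y \<noteq> 0" "\<forall>i\<in>T. y i = 0"
  shows "card T + d \<le> n"
proof -
  have sub: "cs.subspace C" and supp: "\<forall>y\<in>C. \<forall>i. n \<le> i \<longrightarrow> y i = 0"
    using lc unfolding linear_code_def by auto
  have z: "0 \<in> C" using cs.subspace_0[OF sub] .
  have "hamming_dist n y 0 \<in> {hamming_dist n x y | x y. x \<in> C \<and> y \<in> C \<and> x \<noteq> y}"
    using y z by blast
  moreover have "finite {hamming_dist n x y | x y. x \<in> C \<and> y \<in> C \<and> x \<noteq> (y :: nat \<Rightarrow> 'a)}"
  proof (rule finite_subset[of _ "{..n}"])
    show "{hamming_dist n x y | x y. x \<in> C \<and> y \<in> C \<and> x \<noteq> (y :: nat \<Rightarrow> 'a)} \<subseteq> {..n}"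
    proof
      fix m assume "m \<in> {hamming_dist n x y | x y. x \<in> C \<and> y \<in> C \<and> x \<noteq> (y :: nat \<Rightarrow> 'a)}"
      then obtain x y :: "nat \<Rightarrow> 'a" where "m = hamming_dist n x y" by blast
      moreover have "card {i. i < n \<and> x i \<noteq> y i} \<le> card {..<n}" by (intro card_mono) auto
      ultimately show "m \<in> {..n}" unfolding hamming_dist_def by simp
    qed
  qed simp
  ultimately have "d \<le> hamming_dist n y 0" unfolding md[symmetric] min_dist_def by (rule Min_le[rotated])
  also have "hamming_dist n y 0 \<le> card ({..<n} - T)"
    unfolding hamming_dist_def using y(3) by (intro card_mono) auto
  also have "\<dots> = n - card T" using T by (simp add: card_Diff_subset finite_subset)
  finally have "d \<le> n - card T" .
  moreover have "card T \<le> card {..<n}" using T by (intro card_mono) auto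
  ultimately show ?thesis by simp
qed

lemma ex_comb:
  fixes V :: "(nat \<Rightarrow> 'a::field) set"
  assumes "finite S"
  shows "\<forall>y\<in>V. \<forall>w\<in>V. \<forall>c. (\<lambda>l. y l - c * w l) \<in> V \<Longrightarrow> \<forall>y\<in>V. (\<forall>l\<in>S. y l = 0) \<longrightarrow> y i = 0
    \<Longrightarrow> \<exists>\<alpha>. \<forall>y\<in>V. y i = (\<Sum>l\<in>S. \<alpha> l * y l)"
  using assms
proof (induction S arbitrary: V rule: finite_induct)
  case empty then show ?case by auto
next
  case (insert s S)
  define V0 where "V0 = {y\<in>V. y s = 0}"
  have c0: "\<forall>y\<in>V0. \<forall>w\<in>V0. \<forall>c. (\<lambda>l. y l - c * w l) \<in> V0" using insert.prems(1) unfolding V0_def by auto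
  have h0: "\<forall>y\<in>V0. (\<forall>l\<in>S. y l = 0) \<longrightarrow> y i = 0" using insert.prems(2) unfolding V0_def by auto
  obtain \<beta> where \<beta>: "\<forall>y\<in>V0. y i = (\<Sum>l\<in>S. \<beta> l * y l)" using insert.IH[OF c0 h0] by blast
  show ?case
  proof (cases "\<forall>y\<in>V. y s = 0")
    case True
    have "\<forall>y\<in>V. y i = (\<Sum>l\<in>insert s S. (\<beta>(s := 0)) l * y l)"
    proof
      fix y assume "y \<in> V"
      then have "y \<in> V0" "y s = 0" using True unfolding V0_def by auto
      moreover have "(\<Sum>l\<in>S. (\<beta>(s := 0)) l * y l) = (\<Sum>l\<in>S. \<beta> l * y l)"
        using insert.hyps(2) by (intro sum.cong) auto
      ultimately show "y i = (\<Sum>l\<in>insert s S. (\<beta>(s := 0)) l * y l)" using \<beta> insert.hyps by simp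
    qed
    then show ?thesis by blast
  next
    case False
    then obtain w where w: "w \<in> V" "w s \<noteq> 0" by auto
    define \<gamma> where "\<gamma> = (w i - (\<Sum>l\<in>S. \<beta> l * w l)) / w s"
    have "\<forall>y\<in>V. y i = (\<Sum>l\<in>insert s S. (\<beta>(s := \<gamma>)) l * y l)"
    proof
      fix y assume y: "y \<in> V"
      define c where "c = y s / w s"
      define z where "z = (\<lambda>l. y l - c * w l)"
      have "z \<in> V" unfolding z_def using insert.prems(1) y w(1) by blast
      moreover have "z s = 0" unfolding z_def c_def using w(2) by simp
      ultimately have "z \<in> V0" unfolding V0_def by simp
      then have "z i = (\<Sum>l\<in>S. \<beta> l * z l)" using \<beta> by blast
      also have "\<dots> = (\<Sum>l\<in>S. \<beta> l * y l) - c * (\<Sum>l\<in>S. \<beta> l * w l)"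
        unfolding z_def by (simp add: algebra_simps sum_subtractf sum_distrib_left)
      finally have e: "y i = (\<Sum>l\<in>S. \<beta> l * y l) + c * (w i - (\<Sum>l\<in>S. \<beta> l * w l))"
        unfolding z_def by (simp add: algebra_simps)
      have "c * (w i - (\<Sum>l\<in>S. \<beta> l * w l)) = \<gamma> * y s" unfolding c_def \<gamma>_def using w(2) by simp
      moreover have "(\<Sum>l\<in>S. (\<beta>(s := \<gamma>)) l * y l) = (\<Sum>l\<in>S. \<beta> l * y l)"
        using insert.hyps(2) by (intro sum.cong) auto
      ultimately show "y i = (\<Sum>l\<in>insert s S. (\<beta>(s := \<gamma>)) l * y l)" using e insert.hyps by simp
    qed
    then show ?thesis by blast
  qed
qed



theorem theorem1:
  fixes C :: "(nat \<Rightarrow> 'a::{finite,field}) set" and n k d J :: nat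
  assumes "linear_code n C"
    and "code_dim C = k" and "k \<ge> 1"
    and "min_dist n C = d" and "d \<ge> 2"
    and "J = n + 2 - k - d"
  shows "avg_locality n C \<ge>
    of_int \<lceil>real k / real J\<rceil> *
      (1 - (real J * of_int \<lceil>real k / real J\<rceil> - real k) / real n)"
proof -
  note lc = assms(1) and md = assms(4)
  have sub: "cs.subspace C" and supp: "\<forall>y\<in>C. \<forall>i. n \<le> i \<longrightarrow> y i = 0"
    using lc unfolding linear_code_def by auto
  have fin: "finite C" using finite_code[OF supp] .
  define Dm where "Dm T = cs.dim (ZZ C T)" for T
  have D0: "Dm {} = k" using assms(2) unfolding Dm_def ZZ_def code_dim_def by simp
  have A1: "\<And>T j. T \<subseteq> {..<n} \<Longrightarrow> j < n \<Longrightarrow> Dm T \<le> Dm (insert j T) + 1"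
    unfolding Dm_def using dimstep[OF sub fin] by blast
  have B: "\<And>T. T \<subseteq> {..<n} \<Longrightarrow> Dm T \<ge> 1 \<Longrightarrow> card T + d \<le> n"
  proof -
    fix T assume T: "T \<subseteq> {..<n}" "Dm T \<ge> 1"
    then obtain y where "y \<in> ZZ C T" "y \<noteq> 0" using nonzero_in unfolding Dm_def by blast
    then show "card T + d \<le> n" using weight_bound[OF lc md T(1)] unfolding ZZ_def by blast
  qed
  have d1: "d \<ge> 1" using assms(5) by simp
  have A2: "\<And>T. T \<subseteq> {..<n} \<Longrightarrow> Dm T \<ge> 1 \<Longrightarrow> card T + Dm T + d \<le> n + 1"
    using A2_from_B[OF A1 B d1] by blast
  have kd: "k + d \<le> n + 1" using A2[of "{}"] D0 assms(3) by simp
  define P where "P i m = (\<exists>I \<alpha>. I \<subseteq> {..<n} - {i} \<and> card I = m \<and>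
       (\<forall>y\<in>C. y i = (\<Sum>l\<in>I. \<alpha> l * y l)))" for i m
  have loc_eq: "locality n C i = Least (P i)" for i unfolding locality_def P_def by simp
  have exP: "\<exists>m. P i m" if i: "i < n" for i
  proof -
    have cl: "\<forall>y\<in>C. \<forall>w\<in>C. \<forall>c. (\<lambda>l. y l - c * w l) \<in> C" using sub_closed[OF sub] by blast
    have hy: "\<forall>y\<in>C. (\<forall>l\<in>{..<n} - {i}. y l = 0) \<longrightarrow> y i = 0"
    proof (intro ballI impI)
      fix y assume y: "y \<in> C" "\<forall>l\<in>{..<n} - {i}. y l = 0"
      show "y i = 0"
      proof (rule ccontr)
        assume "y i \<noteq> 0"
        then have "y \<noteq> 0" by auto
        then have "card ({..<n} - {i}) + d \<le> n"
          using weight_bound[OF lc md, of "{..<n} - {i}" y] y by blast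
        then show False using i assms(5) by simp
      qed
    qed
    obtain \<alpha> where "\<forall>y\<in>C. y i = (\<Sum>l\<in>{..<n} - {i}. \<alpha> l * y l)"
      using ex_comb[of "{..<n} - {i}" C i] cl hy by blast
    then show ?thesis unfolding P_def by blast
  qed
  define r where "r i = locality n C i" for i
  define R where "R i = (SOME I. \<exists>\<alpha>. I \<subseteq> {..<n} - {i} \<and> card I = r i \<and>
       (\<forall>y\<in>C. y i = (\<Sum>l\<in>I. \<alpha> l * y l)))" for i
  have Rprop: "\<exists>\<alpha>. R i \<subseteq> {..<n} - {i} \<and> card (R i) = r i \<and>
       (\<forall>y\<in>C. y i = (\<Sum>l\<in>R i. \<alpha> l * y l))" if i: "i < n" for i
  proof -
    have "P i (r i)" unfolding r_def loc_eq using exP[OF i] by (rule LeastI_ex)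
    then show ?thesis unfolding R_def P_def by (rule someI_ex)
  qed
  have A3: "\<And>i. i < n \<Longrightarrow> R i \<subseteq> {..<n} - {i} \<and> card (R i) = r i" using Rprop by blast
  have A4: "\<And>i T. i < n \<Longrightarrow> R i \<subseteq> T \<Longrightarrow> T \<subseteq> {..<n} \<Longrightarrow> Dm (insert i T) = Dm T"
  proof -
    fix i T assume i: "i < n" and RT: "R i \<subseteq> T" and "T \<subseteq> {..<n}"
    obtain \<alpha> where \<alpha>: "\<forall>y\<in>C. y i = (\<Sum>l\<in>R i. \<alpha> l * y l)" using Rprop[OF i] by blast
    have "ZZ C (insert i T) = ZZ C T"
    proof
      show "ZZ C T \<subseteq> ZZ C (insert i T)"
      proof
        fix y assume y: "y \<in> ZZ C T"
        then have "y i = (\<Sum>l\<in>R i. \<alpha> l * y l)" using \<alpha> unfolding ZZ_def by blast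
        also have "\<dots> = 0" using y RT unfolding ZZ_def by (intro sum.neutral) auto
        finally show "y \<in> ZZ C (insert i T)" using y unfolding ZZ_def by auto
      qed
    qed (auto simp: ZZ_def)
    then show "Dm (insert i T) = Dm T" unfolding Dm_def by simp
  qed
  have J1: "J \<ge> 1" using kd assms(6) by simp
  have Jint: "int J = int n + 2 - int k - int d" using kd assms(6) by simp
  define T where "T = \<lceil>real k / real J\<rceil>"
  have Tpos: "T \<ge> 1" unfolding T_def using J1 assms(3) by (simp add: divide_pos_pos)
  define t where "t = nat T"
  have tT: "int t = T" unfolding t_def using Tpos by simp
  have t1: "t \<ge> 1" using Tpos tT by simp
  have Tlt: "real_of_int T - 1 < real k / real J" unfolding T_def by linarith
  have cond: "(int t - 1) * int J < int k"
  proof -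
    have "(real_of_int T - 1) * real J < real k" using Tlt J1 by (simp add: pos_less_divide_eq)
    then have "real_of_int ((T - 1) * int J) < real_of_int (int k)" by simp
    then have "(T - 1) * int J < int k" by (simp only: of_int_less_iff)
    then show ?thesis using tT by simp
  qed
  have main: "(\<Sum>i\<in>{..<n}-{}. int (r i)) \<ge> int t * (int d - 1 + 2 * int (Dm {}) - int t
        - (int n + 1 - int d - int (card ({}::nat set)) - int (Dm {})) * (int t - 1))"
  proof (rule main_abs[OF A1 A2 A3 A4 d1 t1])
    show "(\<forall>i\<in>{..<n}-{}. t \<le> r i) \<or>
       (int t - 1) * (int n + 1 - int d - int (card ({}::nat set)) - int (Dm {}) + 1) < int (Dm {})"
      using cond Jint D0 by (simp add: algebra_simps)
  qed (use D0 assms(3) in auto)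
  have mainI: "(\<Sum>i<n. int (r i)) \<ge> T * (int n + int k - int J * T)"
  proof -
    have e: "T * (int n + int k - int J * T) = T * (int d - 1 + 2 * int k - T - (int n + 1 - int d - int k) * (T - 1))"
      by (simp add: Jint algebra_simps)
    show ?thesis using main D0 tT unfolding e by simp
  qed
  define S where "S = (\<Sum>i<n. real (locality n C i))"
  have "real_of_int (\<Sum>i<n. int (r i)) = S" unfolding S_def r_def by simp
  moreover have "real_of_int (T * (int n + int k - int J * T)) \<le> real_of_int (\<Sum>i<n. int (r i))"
    using mainI by (simp only: of_int_le_iff)
  ultimately have SI: "S \<ge> real_of_int T * (real n + real k - real J * real_of_int T)" by simp
  have npos: "real n > 0" using kd assms(3,5) by simp
  have "real_of_int T * (1 - (real J * real_of_int T - real k) / real n)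
        = real_of_int T * (real n + real k - real J * real_of_int T) / real n"
    using npos by (simp add: field_simps)
  also have "\<dots> \<le> S / real n" using SI npos by (simp add: divide_right_mono)
  finally show ?thesis unfolding avg_locality_def S_def T_def .
qed


end
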